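(* For every $n\ge2$ and every $n\times n$ Hermitian matrix $A$, $Y_{n,n-1}(A)\succ X_{n-1}(A)$; that is, the concatenation of $n-1$ copies of $\lambda(A)$ majorizes the vector of all eigenvalues of all $(n-1)\times(n-1)$ principal submatrices of $A$.
   Context: $\lambda(A)$ denotes the vector of eigenvalues of $A$ with multiplicity. For $1\le m\le n$, $X_m(A)$ is the vector listing the eigenvalues, with multiplicity, of all $\binom nm$ principal $m\times m$ submatrices of $A$, and $Y_{n,m}(A)$ is the concatenation of $\binom{n-1}{m-1}$ copies of $\lambda(A)$. For $x,y\in\mathbb R^N$, $x\succ y$ means $\sum_{i=1}^k x^{\downarrow}_i\ge\sum_{i=1}^k y^{\downarrow}_i$ for $k=1,\dots,N$ with equality at $k=N$, where $x^{\downarrow}$ is the non-increasing rearrangement. *)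

theory Defs
  imports "Jordan_Normal_Form.Char_Poly" "Jordan_Normal_Form.Determinant"
    "HOL-Computational_Algebra.Polynomial"
begin

definition hermitian_mat :: "nat \<Rightarrow> complex mat \<Rightarrow> bool" where
  "hermitian_mat n A \<longleftrightarrow> A \<in> carrier_mat n n \<and>
     (\<forall>i<n. \<forall>j<n. A $$ (i, j) = cnj (A $$ (j, i)))"

text \<open>lambda(A): eigenvalues with (algebraic) multiplicity, i.e. the roots of the
  characteristic polynomial with multiplicity; for Hermitian matrices these are real,
  so we take real parts.  Vectors are represented as multisets since majorization
  only depends on the non-increasing rearrangement.\<close>
definition eigs :: "complex mat \<Rightarrow> real multiset" where
  "eigs A = image_mset Re (proots (char_poly A))"

definition X_pred :: "nat \<Rightarrow> complex mat \<Rightarrow> real multiset" where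
  "X_pred n A = (\<Sum>i<n. eigs (mat_delete A i i))"

text \<open>Y_{n,n-1}(A): binom(n-1, n-2) = n-1 copies of lambda(A).\<close>
definition Y_pred :: "nat \<Rightarrow> complex mat \<Rightarrow> real multiset" where
  "Y_pred n A = repeat_mset (n - 1) (eigs A)"

definition desc :: "real multiset \<Rightarrow> real list" where
  "desc M = rev (sorted_list_of_multiset M)"

definition majorizes :: "real multiset \<Rightarrow> real multiset \<Rightarrow> bool" where
  "majorizes x y \<longleftrightarrow> size x = size y \<and>
     (\<forall>k\<in>{1..size x}. sum_list (take k (desc y)) \<le> sum_list (take k (desc x))) \<and>
     sum_list (desc x) = sum_list (desc y)"

end

theory Submission
  imports Defs "Jordan_Normal_Form.Schur_Decomposition"
begin


definition adj :: "complex mat \<Rightarrow> complex mat" where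
  "adj M = mat (dim_col M) (dim_row M) (\<lambda>(i,j). cnj (M $$ (j,i)))"

lemma adj_dim[simp]: "dim_row (adj M) = dim_col M" "dim_col (adj M) = dim_row M"
  by (auto simp: adj_def)

lemma adj_carrier[simp]: "M \<in> carrier_mat a b \<Longrightarrow> adj M \<in> carrier_mat b a"
  unfolding carrier_mat_def by simp

lemma adj_index[simp]: "i < dim_col M \<Longrightarrow> j < dim_row M \<Longrightarrow> adj M $$ (i,j) = cnj (M $$ (j,i))"
  by (auto simp: adj_def)

lemma adj_adj[simp]: "adj (adj M) = M"
  by (rule eq_matI, auto)

lemma mult_entry:
  assumes "A \<in> carrier_mat a b" "B \<in> carrier_mat b c" "i < a" "j < c"
  shows "(A * B) $$ (i,j) = (\<Sum>k<b. A $$ (i,k) * B $$ (k,j))"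
  using assms by (simp add: scalar_prod_def atLeast0LessThan)

lemma adj_mult:
  assumes "A \<in> carrier_mat a b" "B \<in> carrier_mat b c"
  shows "adj (A * B) = adj B * adj A"
proof (rule eq_matI)
  fix i j assume ij: "i < dim_row (adj B * adj A)" "j < dim_col (adj B * adj A)"
  hence i: "i < c" and j: "j < a" using assms by auto
  have "adj (A * B) $$ (i,j) = cnj (\<Sum>k<b. A $$ (j,k) * B $$ (k,i))"
    using assms i j by (simp add: scalar_prod_def atLeast0LessThan)
  also have "\<dots> = (\<Sum>k<b. adj B $$ (i,k) * adj A $$ (k,j))"
    using assms i j by (simp add: mult.commute)
  also have "\<dots> = (adj B * adj A) $$ (i,j)"
    using assms i j by (simp add: scalar_prod_def atLeast0LessThan)
  finally show "adj (A * B) $$ (i,j) = (adj B * adj A) $$ (i,j)" .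
qed (use assms in auto)

lemma adj_one[simp]: "adj (1\<^sub>m n) = 1\<^sub>m n"
  by (rule eq_matI, auto)

definition dmat :: "real list \<Rightarrow> complex mat" where
  "dmat d = mat (length d) (length d) (\<lambda>(i,j). if i = j then complex_of_real (d ! i) else 0)"

lemma dmat_carrier[simp]: "length d = n \<Longrightarrow> dmat d \<in> carrier_mat n n"
  by (auto simp: dmat_def)

lemma dmat_dim[simp]: "dim_row (dmat d) = length d" "dim_col (dmat d) = length d"
  by (auto simp: dmat_def)

lemma adj_dmat[simp]: "adj (dmat d) = dmat d"
  by (rule eq_matI, auto simp: dmat_def)

lemma tri_entry:
  assumes G: "G \<in> carrier_mat n m" and H: "H \<in> carrier_mat n p" and d: "length d = n"
    and i: "i < m" and j: "j < p"
  shows "(adj G * dmat d * H) $$ (i,j) = (\<Sum>l<n. cnj (G $$ (l,i)) * complex_of_real (d ! l) * H $$ (l,j))"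
proof -
  have 1: "(adj G * dmat d) $$ (i,l) = cnj (G $$ (l,i)) * complex_of_real (d ! l)" if l: "l < n" for l
  proof -
    have "(adj G * dmat d) $$ (i,l) = (\<Sum>k<n. adj G $$ (i,k) * dmat d $$ (k,l))"
      using G d i l by (intro mult_entry[of _ m n _ n]) auto
    also have "\<dots> = (\<Sum>k<n. if k = l then cnj (G $$ (l,i)) * complex_of_real (d ! l) else 0)"
      using G d i l by (intro sum.cong) (auto simp: dmat_def)
    finally show ?thesis using l by simp
  qed
  have "(adj G * dmat d * H) $$ (i,j) = (\<Sum>l<n. (adj G * dmat d) $$ (i,l) * H $$ (l,j))"
    using G H d i j by (intro mult_entry[of _ m n _ p]) auto
  also have "\<dots> = (\<Sum>l<n. cnj (G $$ (l,i)) * complex_of_real (d ! l) * H $$ (l,j))"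
    using 1 by (intro sum.cong) auto
  finally show ?thesis .
qed

lemma quad_entry:
  assumes G: "G \<in> carrier_mat n m" and d: "length d = n" and k: "k < m"
  shows "(adj G * dmat d * G) $$ (k,k) = complex_of_real (\<Sum>l<n. d ! l * (cmod (G $$ (l,k)))\<^sup>2)"
proof -
  have "(adj G * dmat d * G) $$ (k,k) = (\<Sum>l<n. cnj (G $$ (l,k)) * complex_of_real (d ! l) * G $$ (l,k))"
    by (rule tri_entry[OF G G d k k])
  also have "\<dots> = (\<Sum>l<n. complex_of_real (d ! l * (cmod (G $$ (l,k)))\<^sup>2))"
  proof (intro sum.cong refl)
    fix l
    show "cnj (G $$ (l,k)) * complex_of_real (d ! l) * G $$ (l,k) = complex_of_real (d ! l * (cmod (G $$ (l,k)))\<^sup>2)"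
      using complex_norm_square[of "G $$ (l,k)"] by (simp add: algebra_simps)
  qed
  finally show ?thesis by simp
qed

lemma gram_entry:
  assumes G: "G \<in> carrier_mat n m" and k: "k < m"
  shows "(adj G * G) $$ (k,k) = complex_of_real (\<Sum>l<n. (cmod (G $$ (l,k)))\<^sup>2)"
proof -
  have "(adj G * G) $$ (k,k) = (\<Sum>l<n. adj G $$ (k,l) * G $$ (l,k))"
    using G k by (intro mult_entry[of _ m n _ m]) auto
  also have "\<dots> = (\<Sum>l<n. complex_of_real ((cmod (G $$ (l,k)))\<^sup>2))"
  proof (intro sum.cong refl)
    fix l assume "l \<in> {..<n}"
    thus "adj G $$ (k,l) * G $$ (l,k) = complex_of_real ((cmod (G $$ (l,k)))\<^sup>2)"
      using G k complex_norm_square[of "G $$ (l,k)"] by (simp add: algebra_simps)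
  qed
  finally show ?thesis by simp
qed

lemma gram_entry':
  assumes G: "G \<in> carrier_mat n m" and l: "l < n"
  shows "(G * adj G) $$ (l,l) = complex_of_real (\<Sum>k<m. (cmod (G $$ (l,k)))\<^sup>2)"
  using gram_entry[of "adj G" m n l] G l by simp



lemma cscalar_sum:
  assumes "v \<in> carrier_vec n" "w \<in> carrier_vec n"
  shows "w \<bullet>c v = (\<Sum>r<n. w $ r * cnj (v $ r))"
  using assms by (simp add: scalar_prod_def atLeast0LessThan)

lemma mult_sq_carrier[simp]: "A \<in> carrier_mat n n \<Longrightarrow> B \<in> carrier_mat n n \<Longrightarrow> A * B \<in> carrier_mat n n"
  by (rule mult_carrier_mat)

lemma tri_entry2:
  assumes M: "M \<in> carrier_mat p n" and N: "N \<in> carrier_mat q n" and d: "length d = n"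
    and i: "i < p" and j: "j < q"
  shows "(M * dmat d * adj N) $$ (i,j) = (\<Sum>l<n. M $$ (i,l) * complex_of_real (d ! l) * cnj (N $$ (j,l)))"
proof -
  have "(M * dmat d * adj N) $$ (i,j) = (adj (adj M) * dmat d * adj N) $$ (i,j)" by simp
  also have "\<dots> = (\<Sum>l<n. cnj (adj M $$ (l,i)) * complex_of_real (d ! l) * adj N $$ (l,j))"
    by (rule tri_entry[of _ n p _ q]) (use assms in auto)
  also have "\<dots> = (\<Sum>l<n. M $$ (i,l) * complex_of_real (d ! l) * cnj (N $$ (j,l)))"
    using assms by (intro sum.cong) auto
  finally show ?thesis .
qed

lemma spectral:
  assumes "A \<in> carrier_mat n n" "adj A = A"
  shows "\<exists>U d. U \<in> carrier_mat n n \<and> adj U * U = 1\<^sub>m n \<and> U * adj U = 1\<^sub>m n \<and> length d = n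
     \<and> A = U * dmat d * adj U"
  using assms
proof (induction n arbitrary: A)
  case 0
  show ?case
    by (rule exI[of _ "1\<^sub>m 0"], rule exI[of _ "[]"]) (use 0 in \<open>auto intro!: eq_matI\<close>)
next
  case (Suc m)
  let ?n = "Suc m"
  have A: "A \<in> carrier_mat ?n ?n" and hA: "adj A = A" using Suc.prems by auto
  obtain as where cp: "char_poly A = (\<Prod>a\<leftarrow>as. [:- a, 1:])" and las: "length as = ?n"
    using char_poly_factorized[OF A] by blast
  define a where "a = hd as"
  have "a \<in> set as" using las by (cases as) (auto simp: a_def)
  hence "poly (char_poly A) a = 0" unfolding cp by (simp add: poly_prod_list_zero_iff)
  hence "eigenvalue A a" using eigenvalue_root_char_poly[OF A] by simp
  then obtain v where v: "v \<in> carrier_vec ?n" "v \<noteq> 0\<^sub>v ?n" and Av: "A *\<^sub>v v = a \<cdot>\<^sub>v v"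
    unfolding eigenvalue_def eigenvector_def using A by auto
  interpret cof_vec_space ?n "TYPE(complex)" .
  define b where "b = basis_completion v"
  from basis_completion[OF v(1) v(2), folded b_def]
  have dist_b: "distinct b" and indep: "\<not> lin_dep (set b)" and bc: "set b \<subseteq> carrier_vec ?n"
    and hdb: "hd b = v" and len_b: "length b = ?n" by auto
  then obtain vs where bv: "b = v # vs" by (cases b) auto
  define ws where "ws = gram_schmidt ?n b"
  from gram_schmidt_result[OF bc dist_b indep ws_def]
  have orth: "corthogonal ws" and wsc: "set ws \<subseteq> carrier_vec ?n" and lws: "length ws = ?n"
    by (auto simp: len_b)
  have "hd ws = v" using gram_schmidt_hd[OF v(1), of vs] bv ws_def by simp
  hence ws0: "ws ! 0 = v" using lws by (cases ws) auto
  have wsk: "ws ! k \<in> carrier_vec ?n" if "k < ?n" for k using wsc lws that by auto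
  define nv where "nv k = sqrt (\<Sum>r<?n. (cmod ((ws!k) $ r))\<^sup>2)" for k
  have wcw: "ws!k \<bullet>c ws!k = complex_of_real ((nv k)\<^sup>2)" if k: "k < ?n" for k
  proof -
    have "ws!k \<bullet>c ws!k = (\<Sum>r<?n. (ws!k) $ r * cnj ((ws!k) $ r))"
      by (rule cscalar_sum[OF wsk[OF k] wsk[OF k]])
    also have "\<dots> = (\<Sum>r<?n. complex_of_real ((cmod ((ws!k) $ r))\<^sup>2))"
      by (intro sum.cong refl) (metis complex_norm_square)
    also have "\<dots> = complex_of_real ((nv k)\<^sup>2)"
      by (simp add: nv_def sum_nonneg)
    finally show ?thesis .
  qed
  have nvpos: "nv k > 0" if k: "k < ?n" for k
  proof -
    have "ws!k \<bullet>c ws!k \<noteq> 0" using corthogonalD[OF orth, of k k] k lws by auto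
    hence "nv k \<noteq> 0" using wcw[OF k] by auto
    moreover have "nv k \<ge> 0" by (simp add: nv_def sum_nonneg)
    ultimately show ?thesis by simp
  qed
  define W where "W = mat ?n ?n (\<lambda>(r,c). (ws!c) $ r / complex_of_real (nv c))"
  have Wc: "W \<in> carrier_mat ?n ?n" by (simp add: W_def)
  have WW: "adj W * W = 1\<^sub>m ?n"
  proof (rule eq_matI)
    fix i j assume "i < dim_row (1\<^sub>m ?n)" "j < dim_col (1\<^sub>m ?n)"
    hence i: "i < ?n" and j: "j < ?n" by auto
    have "(adj W * W) $$ (i,j) = (\<Sum>r<?n. adj W $$ (i,r) * W $$ (r,j))"
      using Wc i j by (intro mult_entry[of _ ?n ?n _ ?n]) auto
    also have "\<dots> = (\<Sum>r<?n. (ws!j) $ r * cnj ((ws!i) $ r)) / (complex_of_real (nv i) * complex_of_real (nv j))"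
      unfolding sum_divide_distrib using i j by (intro sum.cong refl) (auto simp: W_def)
    also have "\<dots> = (ws!j \<bullet>c ws!i) / (complex_of_real (nv i) * complex_of_real (nv j))"
      using cscalar_sum[OF wsk[OF i] wsk[OF j]] by simp
    also have "\<dots> = 1\<^sub>m ?n $$ (i,j)"
    proof (cases "i = j")
      case True
      thus ?thesis using wcw[OF i] nvpos[OF i] i by (simp add: power2_eq_square)
    next
      case False
      thus ?thesis using corthogonalD[OF orth, of j i] i j lws by auto
    qed
    finally show "(adj W * W) $$ (i,j) = 1\<^sub>m ?n $$ (i,j)" .
  qed (use Wc in auto)
  have WW': "W * adj W = 1\<^sub>m ?n"
    using mat_mult_left_right_inverse[OF adj_carrier[OF Wc] Wc WW] .
  have AW0: "(A * W) $$ (r,0) = a * W $$ (r,0)" if r: "r < ?n" for r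
  proof -
    have "(A * W) $$ (r,0) = (\<Sum>s<?n. A $$ (r,s) * W $$ (s,0))"
      using A Wc r by (intro mult_entry[of _ ?n ?n _ ?n]) auto
    also have "\<dots> = (\<Sum>s<?n. A $$ (r,s) * v $ s) / complex_of_real (nv 0)"
      unfolding sum_divide_distrib by (intro sum.cong refl) (auto simp: W_def ws0)
    also have "(\<Sum>s<?n. A $$ (r,s) * v $ s) = (A *\<^sub>v v) $ r"
      using A v r by (simp add: scalar_prod_def atLeast0LessThan)
    also have "\<dots> = a * v $ r" using Av v r by simp
    finally show ?thesis using r by (simp add: W_def ws0)
  qed
  define A' where "A' = adj W * A * W"
  have A'c: "A' \<in> carrier_mat ?n ?n" using A Wc unfolding A'_def by (metis adj_carrier mult_carrier_mat)
  have A'0: "A' $$ (i,0) = (if i = 0 then a else 0)" if i: "i < ?n" for i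
  proof -
    have "A' = adj W * (A * W)" unfolding A'_def using A Wc by (simp add: assoc_mult_mat[of _ ?n ?n _ ?n _ ?n])
    hence "A' $$ (i,0) = (adj W * (A * W)) $$ (i,0)" by simp
    also have "\<dots> = (\<Sum>r<?n. adj W $$ (i,r) * (A * W) $$ (r,0))"
      by (rule mult_entry[of _ ?n ?n _ ?n]) (use A Wc i in auto)
    also have "\<dots> = a * (\<Sum>r<?n. adj W $$ (i,r) * W $$ (r,0))"
      unfolding sum_distrib_left by (intro sum.cong refl) (simp add: AW0)
    also have "(\<Sum>r<?n. adj W $$ (i,r) * W $$ (r,0)) = (adj W * W) $$ (i,0)"
      by (rule mult_entry[symmetric, of _ ?n ?n _ ?n]) (use Wc i in auto)
    finally show ?thesis using WW i by simp
  qed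
  have hA': "adj A' = A'"
  proof -
    have "adj A' = adj W * adj (adj W * A)" unfolding A'_def
      by (rule trans[OF adj_mult[of _ ?n ?n _ ?n]]) (use A Wc in auto)
    also have "adj (adj W * A) = adj A * W"
      by (rule trans[OF adj_mult[of _ ?n ?n _ ?n]]) (use A Wc in auto)
    finally show ?thesis unfolding A'_def hA using A Wc
      by (simp add: assoc_mult_mat[of _ ?n ?n _ ?n _ ?n])
  qed
  have areal: "cnj a = a"
  proof -
    have "adj A' $$ (0,0) = cnj (A' $$ (0,0))" using A'c by simp
    thus ?thesis using hA' A'0[of 0] by simp
  qed
  have aRe: "complex_of_real (Re a) = a" using areal
    by (metis Reals_cnj_iff complex_is_Real_iff of_real_Re)
  have A'row: "A' $$ (0,j) = (if j = 0 then a else 0)" if j: "j < ?n" for j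
  proof -
    have "A' $$ (0,j) = adj A' $$ (0,j)" using hA' by simp
    also have "\<dots> = cnj (A' $$ (j,0))" using A'c j by simp
    finally show ?thesis using A'0[OF j] areal by auto
  qed
  define A3 where "A3 = mat m m (\<lambda>(i,j). A' $$ (Suc i, Suc j))"
  have A3c: "A3 \<in> carrier_mat m m" by (simp add: A3_def)
  have hA3: "adj A3 = A3"
  proof (rule eq_matI)
    fix i j assume "i < dim_row A3" "j < dim_col A3"
    hence i: "i < m" and j: "j < m" by (auto simp: A3_def)
    have "adj A3 $$ (i,j) = cnj (A' $$ (Suc j, Suc i))" using i j by (simp add: A3_def)
    also have "\<dots> = adj A' $$ (Suc i, Suc j)" using A'c i j by simp
    finally show "adj A3 $$ (i,j) = A3 $$ (i,j)" using hA' i j by (simp add: A3_def)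
  qed (auto simp: A3_def)
  obtain V e where Vc: "V \<in> carrier_mat m m" and VV: "adj V * V = 1\<^sub>m m" and VV': "V * adj V = 1\<^sub>m m"
    and le: "length e = m" and A3e: "A3 = V * dmat e * adj V"
    using Suc.IH[OF A3c hA3] by blast
  define V' where "V' = mat ?n ?n (\<lambda>(i,j). if i = 0 \<and> j = 0 then 1 else if i = 0 \<or> j = 0 then 0 else V $$ (i - 1, j - 1))"
  have V'c: "V' \<in> carrier_mat ?n ?n" by (simp add: V'_def)
  define d where "d = Re a # e"
  have ld: "length d = ?n" using le by (simp add: d_def)
  have V'V': "adj V' * V' = 1\<^sub>m ?n"
  proof (rule eq_matI)
    fix i j assume "i < dim_row (1\<^sub>m ?n)" "j < dim_col (1\<^sub>m ?n)"
    hence i: "i < ?n" and j: "j < ?n" by auto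
    have "(adj V' * V') $$ (i,j) = (\<Sum>k<?n. adj V' $$ (i,k) * V' $$ (k,j))"
      using V'c i j by (intro mult_entry[of _ ?n ?n _ ?n]) auto
    also have "\<dots> = adj V' $$ (i,0) * V' $$ (0,j) + (\<Sum>k<m. adj V' $$ (i,Suc k) * V' $$ (Suc k,j))"
      by (rule sum.lessThan_Suc_shift)
    also have "\<dots> = 1\<^sub>m ?n $$ (i,j)"
    proof (cases i)
      case 0
      thus ?thesis using i j V'c by (simp add: V'_def)
    next
      case (Suc i')
      show ?thesis
      proof (cases j)
        case 0
        thus ?thesis using i j V'c Suc by (simp add: V'_def)
      next
        case (Suc j')
        have "(\<Sum>k<m. adj V' $$ (i,Suc k) * V' $$ (Suc k,j)) = (\<Sum>k<m. adj V $$ (i',k) * V $$ (k,j'))"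
          using i j V'c Vc \<open>i = Suc i'\<close> Suc by (intro sum.cong refl) (simp add: V'_def)
        also have "\<dots> = (adj V * V) $$ (i',j')"
          by (rule mult_entry[symmetric, of _ m m _ m]) (use Vc i j \<open>i = Suc i'\<close> Suc in auto)
        finally show ?thesis using VV i j \<open>i = Suc i'\<close> Suc V'c by (simp add: V'_def)
      qed
    qed
    finally show "(adj V' * V') $$ (i,j) = 1\<^sub>m ?n $$ (i,j)" .
  qed (use V'c in auto)
  have A'eq: "A' = V' * dmat d * adj V'"
  proof (rule eq_matI)
    fix i j assume "i < dim_row (V' * dmat d * adj V')" "j < dim_col (V' * dmat d * adj V')"
    hence i: "i < ?n" and j: "j < ?n" using V'c by auto
    have "(V' * dmat d * adj V') $$ (i,j) = (\<Sum>l<?n. V' $$ (i,l) * complex_of_real (d ! l) * cnj (V' $$ (j,l)))"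
      by (rule tri_entry2[OF V'c V'c ld i j])
    also have "\<dots> = V' $$ (i,0) * complex_of_real (d ! 0) * cnj (V' $$ (j,0)) +
       (\<Sum>l<m. V' $$ (i,Suc l) * complex_of_real (d ! Suc l) * cnj (V' $$ (j,Suc l)))"
      by (rule sum.lessThan_Suc_shift)
    also have "\<dots> = A' $$ (i,j)"
    proof (cases i)
      case 0
      thus ?thesis using i j A'row[OF j] aRe by (simp add: V'_def d_def)
    next
      case (Suc i')
      show ?thesis
      proof (cases j)
        case 0
        thus ?thesis using i j Suc A'0[OF i] by (simp add: V'_def d_def)
      next
        case (Suc j')
        have "(\<Sum>l<m. V' $$ (i,Suc l) * complex_of_real (d ! Suc l) * cnj (V' $$ (j,Suc l)))
            = (\<Sum>l<m. V $$ (i',l) * complex_of_real (e ! l) * cnj (V $$ (j',l)))"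
          using i j \<open>i = Suc i'\<close> Suc by (intro sum.cong refl) (simp add: V'_def d_def)
        also have "\<dots> = (V * dmat e * adj V) $$ (i',j')"
          by (rule tri_entry2[symmetric, OF Vc Vc le]) (use i j \<open>i = Suc i'\<close> Suc in auto)
        also have "\<dots> = A' $$ (i,j)" using arg_cong[OF A3e, of "\<lambda>M. M $$ (i',j')"] i j \<open>i = Suc i'\<close> Suc by (simp add: A3_def)
        finally show ?thesis using i j \<open>i = Suc i'\<close> Suc by (simp add: V'_def)
      qed
    qed
    finally show "A' $$ (i,j) = (V' * dmat d * adj V') $$ (i,j)" by simp
  qed (use A'c V'c in auto)
  define U where "U = W * V'"
  have Uc: "U \<in> carrier_mat ?n ?n" using Wc V'c by (simp add: U_def)
  have adjU: "adj U = adj V' * adj W" unfolding U_def by (rule adj_mult[OF Wc V'c])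
  have UU: "adj U * U = 1\<^sub>m ?n"
  proof -
    have "adj U * U = (adj V' * adj W) * (W * V')" using adjU U_def by simp
    also have "\<dots> = adj V' * ((adj W * W) * V')" using Wc V'c
      by (simp add: assoc_mult_mat[of _ ?n ?n _ ?n _ ?n])
    finally show ?thesis using WW V'V' V'c by simp
  qed
  have UU': "U * adj U = 1\<^sub>m ?n"
    using mat_mult_left_right_inverse[OF adj_carrier[OF Uc] Uc UU] .
  have "U * dmat d * adj U = W * V' * dmat d * (adj V' * adj W)"
    using adjU U_def by simp
  also have "\<dots> = W * (V' * dmat d * adj V') * adj W"
    using Wc V'c ld by (simp add: assoc_mult_mat[of _ ?n ?n _ ?n _ ?n])
  also have "\<dots> = (W * adj W) * A * (W * adj W)"
    unfolding A'eq[symmetric] A'_def using Wc A by (simp add: assoc_mult_mat[of _ ?n ?n _ ?n _ ?n])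
  also have "\<dots> = A" using WW' A by simp
  finally show ?case using Uc UU UU' ld by blast
qed



lemma proots_lin: "proots (\<Prod>a\<leftarrow>xs. [:- a, 1:]) = mset (xs :: complex list)"
proof (induction xs)
  case Nil
  then show ?case by simp
next
  case (Cons x xs)
  have nz: "(\<Prod>a\<leftarrow>xs. [:- a, 1:]) \<noteq> 0" by (auto simp: prod_list_zero_iff)
  have "proots (\<Prod>a\<leftarrow>x # xs. [:- a, 1:]) = proots [:- x, 1:] + proots (\<Prod>a\<leftarrow>xs. [:- a, 1:])"
    unfolding prod_list.Cons list.map by (rule proots_mult) (use nz in auto)
  then show ?case using Cons by simp
qed

lemma unitary_sim:
  assumes A: "A \<in> carrier_mat n n" and U: "U \<in> carrier_mat n n" and UU: "adj U * U = 1\<^sub>m n"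
    and UU': "U * adj U = 1\<^sub>m n" and d: "length d = n" and Ae: "A = U * dmat d * adj U"
  shows "eigs A = mset d"
proof -
  have dA: "dim_row A = n" using A by simp
  have "similar_mat_wit A (dmat d) U (adj U)"
    unfolding similar_mat_wit_def Let_def dA
  proof (intro conjI)
    show "{A, dmat d, U, adj U} \<subseteq> carrier_mat n n" using A U d by simp
    show "U * adj U = 1\<^sub>m n" by (rule UU')
    show "adj U * U = 1\<^sub>m n" by (rule UU)
    show "A = U * dmat d * adj U" by (rule Ae)
  qed
  hence "similar_mat A (dmat d)" unfolding similar_mat_def by blast
  hence cp1: "char_poly A = char_poly (dmat d)" by (rule char_poly_similar)
  have cp2: "char_poly (dmat d) = (\<Prod>a\<leftarrow>diag_mat (dmat d). [:- a, 1:])"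
    by (rule char_poly_upper_triangular[of _ n]) (use d in \<open>auto simp: upper_triangular_def dmat_def\<close>)
  have dg: "diag_mat (dmat d) = map complex_of_real d"
    by (rule nth_equalityI) (auto simp: diag_mat_def dmat_def)
  have "proots (char_poly A) = mset (map complex_of_real d)"
    unfolding cp1 cp2 dg by (rule proots_lin)
  thus ?thesis unfolding eigs_def by (simp add: multiset.map_comp o_def)
qed

lemma cn: "z * complex_of_real c * cnj z = complex_of_real (c * (cmod z)\<^sup>2)"
proof -
  have "z * complex_of_real c * cnj z = complex_of_real c * (z * cnj z)" by (simp add: algebra_simps)
  also have "\<dots> = complex_of_real c * complex_of_real ((cmod z)\<^sup>2)" by (simp only: complex_norm_square)
  finally show ?thesis by simp
qed

lemma unitary_trace:
  assumes U: "U \<in> carrier_mat n n" and UU: "adj U * U = 1\<^sub>m n"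
    and d: "length d = n"
  shows "(\<Sum>r<n. (U * dmat d * adj U) $$ (r,r)) = complex_of_real (sum_list d)"
proof -
  have col: "(\<Sum>r<n. (cmod (U $$ (r,l)))\<^sup>2) = 1" if l: "l < n" for l
  proof -
    have "complex_of_real (\<Sum>r<n. (cmod (U $$ (r,l)))\<^sup>2) = (adj U * U) $$ (l,l)"
      using gram_entry[OF U l] by simp
    also have "\<dots> = 1" using UU l by simp
    finally show ?thesis by (metis of_real_eq_1_iff)
  qed
  have "(\<Sum>r<n. (U * dmat d * adj U) $$ (r,r)) = (\<Sum>r<n. \<Sum>l<n. U $$ (r,l) * complex_of_real (d ! l) * cnj (U $$ (r,l)))"
    by (intro sum.cong refl tri_entry2[OF U U d]) auto
  also have "\<dots> = (\<Sum>r<n. \<Sum>l<n. complex_of_real (d ! l * (cmod (U $$ (r,l)))\<^sup>2))"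
    by (intro sum.cong refl) (rule cn)
  also have "\<dots> = complex_of_real (\<Sum>r<n. \<Sum>l<n. d ! l * (cmod (U $$ (r,l)))\<^sup>2)"
    by simp
  also have "(\<Sum>r<n. \<Sum>l<n. d ! l * (cmod (U $$ (r,l)))\<^sup>2) = (\<Sum>l<n. \<Sum>r<n. d ! l * (cmod (U $$ (r,l)))\<^sup>2)"
    by (rule sum.swap)
  also have "\<dots> = (\<Sum>l<n. d ! l * (\<Sum>r<n. (cmod (U $$ (r,l)))\<^sup>2))"
    by (simp add: sum_distrib_left)
  also have "\<dots> = complex_of_real (\<Sum>l<n. d ! l)"
    using col by simp
  also have "(\<Sum>l<n. d ! l) = sum_list d"
    using d by (simp add: sum_list_sum_nth atLeast0LessThan)
  finally show ?thesis .
qed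

lemma hermitian_adj:
  assumes "hermitian_mat n A" shows "adj A = A"
proof -
  from assms have A: "A \<in> carrier_mat n n" and h: "\<forall>i<n. \<forall>j<n. A $$ (i,j) = cnj (A $$ (j,i))"
    unfolding hermitian_mat_def by blast+
  show ?thesis
  proof (rule eq_matI)
    fix i j assume "i < dim_row A" "j < dim_col A"
    then show "adj A $$ (i,j) = A $$ (i,j)" using A h[rule_format, of i j] by simp
  qed (use A in simp_all)
qed



lemma real_part:
  fixes t c :: real and d :: "nat \<Rightarrow> real" and e :: "nat \<Rightarrow> nat \<Rightarrow> real" and g :: "nat \<Rightarrow> nat \<Rightarrow> nat \<Rightarrow> real"
  assumes g0: "\<And>i l k. g i l k \<ge> 0"
   and eik: "\<And>i k. i < n \<Longrightarrow> k < m \<Longrightarrow> e i k = (\<Sum>l<n. d l * g i l k)"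
   and g1: "\<And>i k. i < n \<Longrightarrow> k < m \<Longrightarrow> (\<Sum>l<n. g i l k) = 1"
   and gr: "\<And>l. l < n \<Longrightarrow> (\<Sum>i<n. \<Sum>k<m. g i l k) \<le> c"
  shows "(\<Sum>i<n. \<Sum>k<m. max (e i k - t) 0) \<le> c * (\<Sum>l<n. max (d l - t) 0)"
proof -
  define h where "h i k l = (if t < e i k then (d l - t) * g i l k else 0)" for i k l
  have 1: "max (e i k - t) 0 = (\<Sum>l<n. h i k l)" if i: "i < n" and k: "k < m" for i k
  proof -
    have "e i k - t = (\<Sum>l<n. d l * g i l k) - t * (\<Sum>l<n. g i l k)"
      using eik[OF i k] g1[OF i k] by simp
    also have "\<dots> = (\<Sum>l<n. (d l - t) * g i l k)"
      by (simp add: sum_distrib_left sum_subtractf left_diff_distrib)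
    finally have eq: "e i k - t = (\<Sum>l<n. (d l - t) * g i l k)" .
    show ?thesis
    proof (cases "t < e i k")
      case True
      hence "max (e i k - t) 0 = e i k - t" by simp
      also have "\<dots> = (\<Sum>l<n. h i k l)" unfolding eq h_def using True by simp
      finally show ?thesis .
    next
      case False
      thus ?thesis unfolding h_def by simp
    qed
  qed
  have "(\<Sum>i<n. \<Sum>k<m. max (e i k - t) 0) = (\<Sum>i<n. \<Sum>k<m. \<Sum>l<n. h i k l)"
    using 1 by simp
  also have "\<dots> = (\<Sum>i<n. \<Sum>l<n. \<Sum>k<m. h i k l)"
    by (rule sum.cong[OF refl], rule sum.swap)
  also have "\<dots> = (\<Sum>l<n. \<Sum>i<n. \<Sum>k<m. h i k l)"
    by (rule sum.swap)
  also have "\<dots> \<le> (\<Sum>l<n. c * max (d l - t) 0)"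
  proof (rule sum_mono)
    fix l assume l: "l \<in> {..<n}"
    show "(\<Sum>i<n. \<Sum>k<m. h i k l) \<le> c * max (d l - t) 0"
    proof (cases "d l \<le> t")
      case True
      have "(\<Sum>i<n. \<Sum>k<m. h i k l) \<le> (\<Sum>i<n. \<Sum>k<m. 0)"
        unfolding h_def using True g0 by (intro sum_mono) (auto simp: mult_nonpos_nonneg)
      thus ?thesis using True by simp
    next
      case False
      have "(\<Sum>i<n. \<Sum>k<m. h i k l) \<le> (\<Sum>i<n. \<Sum>k<m. (d l - t) * g i l k)"
        unfolding h_def using False g0 by (intro sum_mono) auto
      also have "\<dots> = (d l - t) * (\<Sum>i<n. \<Sum>k<m. g i l k)"
        by (simp add: sum_distrib_left)
      also have "\<dots> \<le> (d l - t) * c"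
        using gr l False by (intro mult_left_mono) auto
      finally show ?thesis using False by (simp add: mult.commute)
    qed
  qed
  also have "\<dots> = c * (\<Sum>l<n. max (d l - t) 0)"
    by (simp add: sum_distrib_left)
  finally show ?thesis .
qed

lemma reindex_ins:
  fixes f :: "nat \<Rightarrow> 'a :: ab_group_add"
  assumes i: "i < n"
  shows "(\<Sum>c<n-1. f (if c < i then c else Suc c)) = (\<Sum>r<n. f r) - f i"
proof -
  let ?h = "\<lambda>c. if c < i then c else Suc c"
  have inj: "inj_on ?h {..<n-1}" by (auto simp: inj_on_def split: if_splits)
  have im: "?h ` {..<n-1} = {..<n} - {i}"
  proof
    show "?h ` {..<n-1} \<subseteq> {..<n} - {i}" using i by auto
    show "{..<n} - {i} \<subseteq> ?h ` {..<n-1}"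
    proof
      fix r assume r: "r \<in> {..<n} - {i}"
      show "r \<in> ?h ` {..<n-1}"
      proof (cases "r < i")
        case True
        thus ?thesis using r i by (intro image_eqI[of _ _ r]) auto
      next
        case False
        thus ?thesis using r i by (intro image_eqI[of _ _ "r - 1"]) auto
      qed
    qed
  qed
  have "(\<Sum>c<n-1. f (?h c)) = sum f (?h ` {..<n-1})"
    using sum.reindex[OF inj, of f] by simp
  also have "\<dots> = sum f ({..<n} - {i})" using im by simp
  also have "\<dots> = (\<Sum>r<n. f r) - f i" using i by (simp add: sum_diff1)
  finally show ?thesis .
qed

lemma assoc_dims:
  "dim_col A = dim_row B \<Longrightarrow> dim_col B = dim_row C \<Longrightarrow> A * B * C = A * (B * C)"
  by (rule assoc_mult_mat[of A "dim_row A" "dim_col A" B "dim_col B" C "dim_col C"]) auto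

definition selm :: "nat \<Rightarrow> nat \<Rightarrow> complex mat" where
  "selm n i = mat n (n-1) (\<lambda>(r,c). if r = (if c < i then c else Suc c) then 1 else 0)"

lemma selm_dim[simp]: "dim_row (selm n i) = n" "dim_col (selm n i) = n - 1"
  by (auto simp: selm_def)

lemma selm_carrier[simp]: "selm n i \<in> carrier_mat n (n-1)"
  by (rule carrier_matI) auto

lemma delta_sum1:
  fixes f :: "nat \<Rightarrow> complex"
  assumes "x < n"
  shows "(\<Sum>r<n. (if r = x then 1 else 0) * f r) = f x"
proof -
  have "(\<Sum>r<n. (if r = x then 1 else 0) * f r) = (\<Sum>r<n. if r = x then f r else 0)"
    by (intro sum.cong refl) auto
  thus ?thesis using assms by simp
qed

lemma delta_sum2:
  fixes f :: "nat \<Rightarrow> complex"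
  assumes "x < n"
  shows "(\<Sum>r<n. f r * (if r = x then 1 else 0)) = f x"
proof -
  have "(\<Sum>r<n. f r * (if r = x then 1 else 0)) = (\<Sum>r<n. if r = x then f r else 0)"
    by (intro sum.cong refl) auto
  thus ?thesis using assms by simp
qed

lemma selm_SAS:
  assumes A: "A \<in> carrier_mat n n" and i: "i < n"
  shows "adj (selm n i) * A * selm n i = mat_delete A i i"
proof (rule eq_matI)
  fix c c' assume "c < dim_row (mat_delete A i i)" "c' < dim_col (mat_delete A i i)"
  hence c: "c < n - 1" and c': "c' < n - 1" using A by auto
  let ?h = "\<lambda>c. if c < i then c else Suc c"
  have hc: "?h c < n" "?h c' < n" using c c' by auto
  have 1: "(adj (selm n i) * A) $$ (c,s) = A $$ (?h c, s)" if s: "s < n" for s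
  proof -
    have "(adj (selm n i) * A) $$ (c,s) = (\<Sum>r<n. adj (selm n i) $$ (c,r) * A $$ (r,s))"
      by (rule mult_entry[of _ "n-1" n _ n]) (use A c s in auto)
    also have "\<dots> = (\<Sum>r<n. (if r = ?h c then 1 else 0) * A $$ (r,s))"
      using c by (intro sum.cong refl) (auto simp: selm_def)
    also have "\<dots> = A $$ (?h c, s)" by (rule delta_sum1[OF hc(1)])
    finally show ?thesis .
  qed
  have "(adj (selm n i) * A * selm n i) $$ (c,c') = (\<Sum>s<n. (adj (selm n i) * A) $$ (c,s) * selm n i $$ (s,c'))"
    by (rule mult_entry[of _ "n-1" n _ "n-1"]) (use A c c' in auto)
  also have "\<dots> = (\<Sum>s<n. A $$ (?h c, s) * (if s = ?h c' then 1 else 0))"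
    using c' 1 by (intro sum.cong refl) (auto simp: selm_def)
  also have "\<dots> = A $$ (?h c, ?h c')" by (rule delta_sum2[OF hc(2)])
  finally show "(adj (selm n i) * A * selm n i) $$ (c,c') = mat_delete A i i $$ (c,c')"
    using A c c' by (simp add: mat_delete_def)
qed (use A in auto)

lemma selm_SS:
  assumes i: "i < n"
  shows "adj (selm n i) * selm n i = 1\<^sub>m (n-1)"
proof (rule eq_matI)
  fix c c' assume "c < dim_row (1\<^sub>m (n-1))" "c' < dim_col (1\<^sub>m (n-1))"
  hence c: "c < n - 1" and c': "c' < n - 1" by auto
  let ?h = "\<lambda>c. if c < i then c else Suc c"
  have hc: "?h c < n" using c by auto
  have "(adj (selm n i) * selm n i) $$ (c,c') = (\<Sum>r<n. adj (selm n i) $$ (c,r) * selm n i $$ (r,c'))"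
    by (rule mult_entry[of _ "n-1" n _ "n-1"]) (use c c' in auto)
  also have "\<dots> = (\<Sum>r<n. (if r = ?h c then 1 else 0) * (if r = ?h c' then 1 else 0))"
    using c c' by (intro sum.cong refl) (auto simp: selm_def)
  also have "\<dots> = (if ?h c = ?h c' then 1 else 0)" by (rule delta_sum1[OF hc])
  also have "\<dots> = 1\<^sub>m (n-1) $$ (c,c')" using c c' by auto
  finally show "(adj (selm n i) * selm n i) $$ (c,c') = 1\<^sub>m (n-1) $$ (c,c')" .
qed auto

lemma US_entry:
  assumes U: "U \<in> carrier_mat n n" and i: "i < n" and l: "l < n" and c: "c < n - 1"
  shows "(adj U * selm n i) $$ (l,c) = cnj (U $$ (if c < i then c else Suc c, l))"
proof -
  let ?h = "\<lambda>c. if c < i then c else Suc c"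
  have hc: "?h c < n" using c by auto
  have "(adj U * selm n i) $$ (l,c) = (\<Sum>r<n. adj U $$ (l,r) * selm n i $$ (r,c))"
    by (rule mult_entry[of _ n n _ "n-1"]) (use U l c in auto)
  also have "\<dots> = (\<Sum>r<n. cnj (U $$ (r,l)) * (if r = ?h c then 1 else 0))"
    using U l c by (intro sum.cong refl) (auto simp: selm_def)
  also have "\<dots> = cnj (U $$ (?h c, l))" by (rule delta_sum2[OF hc])
  finally show ?thesis .
qed



lemma msum: "sum_mset (image_mset f (mset xs)) = (\<Sum>k<length xs. f (xs ! k))"
proof -
  have "sum_mset (image_mset f (mset xs)) = sum_list (map f xs)"
    by (metis mset_map sum_mset_sum_list)
  also have "\<dots> = (\<Sum>k<length xs. f (xs ! k))"
    by (simp add: sum_list_sum_nth atLeast0LessThan)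
  finally show ?thesis .
qed

lemma col_norm:
  assumes U: "U \<in> carrier_mat n n" and UU: "adj U * U = 1\<^sub>m n" and l: "l < n"
  shows "(\<Sum>r<n. (cmod (U $$ (r,l)))\<^sup>2) = 1"
proof -
  have "complex_of_real (\<Sum>r<n. (cmod (U $$ (r,l)))\<^sup>2) = (adj U * U) $$ (l,l)"
    using gram_entry[OF U l] by simp
  also have "\<dots> = 1" using UU l by simp
  finally show ?thesis by (metis of_real_eq_1_iff)
qed

lemma key:
  fixes t :: real
  assumes A: "A \<in> carrier_mat n n" and hA: "adj A = A"
  shows "(\<Sum>i<n. sum_mset (image_mset (\<lambda>x. max (x - t) 0) (eigs (mat_delete A i i))))
     \<le> real (n - 1) * sum_mset (image_mset (\<lambda>x. max (x - t) 0) (eigs A))"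
proof -
  define m where "m = n - 1"
  obtain U d where Uc: "U \<in> carrier_mat n n" and UU: "adj U * U = 1\<^sub>m n" and UU': "U * adj U = 1\<^sub>m n"
    and ld: "length d = n" and Ae: "A = U * dmat d * adj U"
    using spectral[OF A hA] by blast
  have eA: "eigs A = mset d" by (rule unitary_sim[OF A Uc UU UU' ld Ae])
  have Bc: "mat_delete A i i \<in> carrier_mat m m" for i using mat_delete_carrier[OF A] by (simp add: m_def)
  have hB: "adj (mat_delete A i i) = mat_delete A i i" if i: "i < n" for i
  proof (rule eq_matI)
    fix c c' assume "c < dim_row (mat_delete A i i)" "c' < dim_col (mat_delete A i i)"
    hence c: "c < n - 1" and c': "c' < n - 1" using A by auto
    let ?h = "\<lambda>c. if c < i then c else Suc c"
    have "adj (mat_delete A i i) $$ (c,c') = cnj (A $$ (?h c', ?h c))"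
      using A c c' by (simp add: mat_delete_def)
    also have "\<dots> = adj A $$ (?h c, ?h c')" using A c c' by simp
    also have "\<dots> = A $$ (?h c, ?h c')" using hA by simp
    finally show "adj (mat_delete A i i) $$ (c,c') = mat_delete A i i $$ (c,c')"
      using A c c' by (simp add: mat_delete_def)
  qed (use A in auto)
  have "\<forall>i. \<exists>V e. i < n \<longrightarrow> (V \<in> carrier_mat m m \<and> adj V * V = 1\<^sub>m m \<and> V * adj V = 1\<^sub>m m \<and> length e = m
     \<and> mat_delete A i i = V * dmat e * adj V)"
    using spectral[OF Bc hB] by blast
  then obtain V e where Ve: "\<And>i. i < n \<Longrightarrow> (V i \<in> carrier_mat m m \<and> adj (V i) * V i = 1\<^sub>m m \<and> V i * adj (V i) = 1\<^sub>m m
     \<and> length (e i) = m \<and> mat_delete A i i = V i * dmat (e i) * adj (V i))"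
    by metis
  define G where "G i = adj U * selm n i * V i" for i
  define g where "g i l k = (cmod (G i $$ (l,k)))\<^sup>2" for i l k
  have Sc: "selm n i \<in> carrier_mat n m" for i unfolding m_def by (rule selm_carrier)
  have USc: "adj U * selm n i \<in> carrier_mat n m" for i
    using Uc Sc by (meson adj_carrier mult_carrier_mat)
  have Gc: "G i \<in> carrier_mat n m" if i: "i < n" for i
    using Ve[OF i] Uc Sc unfolding G_def by (meson adj_carrier mult_carrier_mat)
  have adjG: "adj (G i) = adj (V i) * (adj (selm n i) * U)" if i: "i < n" for i
  proof -
    have "adj (G i) = adj (V i) * adj (adj U * selm n i)"
      unfolding G_def by (rule adj_mult[of _ n m _ m]) (use Ve[OF i] USc in auto)
    also have "adj (adj U * selm n i) = adj (selm n i) * U"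
      by (subst adj_mult[of _ n n _ m]) (use Uc Sc in auto)
    finally show ?thesis .
  qed
  have dims: "dim_row U = n" "dim_col U = n" "dim_row (dmat d) = n" "dim_col (dmat d) = n"
    using Uc ld by auto
  have dimsV: "dim_row (V i) = m" "dim_col (V i) = m" "dim_row (dmat (e i)) = m" "dim_col (dmat (e i)) = m"
    if i: "i < n" for i using Ve[OF i] by auto
  have GDG: "adj (G i) * dmat d * G i = dmat (e i)" if i: "i < n" for i
  proof -
    note dv = dimsV[OF i]
    have "adj (G i) * dmat d * G i = adj (V i) * (adj (selm n i) * (U * dmat d * adj U) * selm n i) * V i"
      unfolding adjG[OF i] unfolding G_def using dims dv by (simp add: assoc_dims m_def)
    also have "\<dots> = adj (V i) * mat_delete A i i * V i"
      using selm_SAS[OF A i] Ae by simp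
    also have "\<dots> = adj (V i) * (V i * dmat (e i) * adj (V i)) * V i"
      using Ve[OF i] by simp
    also have "\<dots> = (adj (V i) * V i) * dmat (e i) * (adj (V i) * V i)"
      using dv by (simp add: assoc_dims)
    also have "\<dots> = dmat (e i)" using Ve[OF i] by simp
    finally show ?thesis .
  qed
  have GG: "adj (G i) * G i = 1\<^sub>m m" if i: "i < n" for i
  proof -
    note dv = dimsV[OF i]
    have "adj (G i) * G i = adj (V i) * (adj (selm n i) * (U * adj U) * selm n i) * V i"
      unfolding adjG[OF i] unfolding G_def using dims dv by (simp add: assoc_dims m_def)
    also have "adj (selm n i) * (U * adj U) * selm n i = 1\<^sub>m m"
      using selm_SS[OF i] UU' Sc[of i] by (simp add: m_def)
    also have "adj (V i) * 1\<^sub>m m * V i = adj (V i) * V i"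
      using Ve[OF i] by (metis adj_carrier right_mult_one_mat)
    also have "\<dots> = 1\<^sub>m m" using Ve[OF i] by simp
    finally show ?thesis .
  qed
  have GGr: "(\<Sum>k<m. g i l k) = 1 - (cmod (U $$ (i,l)))\<^sup>2" if i: "i < n" and l: "l < n" for i l
  proof -
    note dv = dimsV[OF i]
    define H where "H = adj U * selm n i"
    have Hc: "H \<in> carrier_mat n m" unfolding H_def using Uc Sc by (meson adj_carrier mult_carrier_mat)
    have adjH: "adj H = adj (selm n i) * U"
      unfolding H_def by (subst adj_mult[of _ n n _ m]) (use Uc Sc in auto)
    have "G i * adj (G i) = H * (V i * adj (V i)) * adj H"
      unfolding adjG[OF i] adjH unfolding G_def H_def using dims dv by (simp add: assoc_dims m_def)
    also have "\<dots> = H * adj H" using Ve[OF i] Hc by simp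
    finally have GH: "G i * adj (G i) = H * adj H" .
    have "complex_of_real (\<Sum>k<m. g i l k) = (G i * adj (G i)) $$ (l,l)"
      using gram_entry'[OF Gc[OF i] l] by (simp add: g_def)
    also have "\<dots> = complex_of_real (\<Sum>c<m. (cmod (H $$ (l,c)))\<^sup>2)"
      unfolding GH using gram_entry'[OF Hc l] by simp
    finally have 1: "(\<Sum>k<m. g i l k) = (\<Sum>c<m. (cmod (H $$ (l,c)))\<^sup>2)" by (metis of_real_eq_iff)
    also have "\<dots> = (\<Sum>c<n-1. (cmod (U $$ (if c < i then c else Suc c, l)))\<^sup>2)"
      unfolding m_def H_def by (intro sum.cong refl) (simp add: US_entry[OF Uc i l])
    also have "\<dots> = (\<Sum>r<n. (cmod (U $$ (r, l)))\<^sup>2) - (cmod (U $$ (i, l)))\<^sup>2"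
      by (rule reindex_ins[OF i])
    also have "\<dots> = 1 - (cmod (U $$ (i, l)))\<^sup>2" using col_norm[OF Uc UU l] by simp
    finally show ?thesis .
  qed
  have eik: "e i ! k = (\<Sum>l<n. d ! l * g i l k)" if i: "i < n" and k: "k < m" for i k
  proof -
    have "complex_of_real (e i ! k) = dmat (e i) $$ (k,k)" using Ve[OF i] k by (simp add: dmat_def)
    also have "\<dots> = (adj (G i) * dmat d * G i) $$ (k,k)" using GDG[OF i] by simp
    also have "\<dots> = complex_of_real (\<Sum>l<n. d ! l * g i l k)"
      unfolding g_def by (rule quad_entry[OF Gc[OF i] ld k])
    finally show ?thesis by (metis of_real_eq_iff)
  qed
  have g1: "(\<Sum>l<n. g i l k) = 1" if i: "i < n" and k: "k < m" for i k
  proof -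
    have "complex_of_real (\<Sum>l<n. g i l k) = (adj (G i) * G i) $$ (k,k)"
      unfolding g_def using gram_entry[OF Gc[OF i] k] by simp
    also have "\<dots> = 1" using GG[OF i] k by simp
    finally show ?thesis by (metis of_real_eq_1_iff)
  qed
  have gr: "(\<Sum>i<n. \<Sum>k<m. g i l k) \<le> real (n - 1)" if l: "l < n" for l
  proof -
    have "(\<Sum>i<n. \<Sum>k<m. g i l k) = (\<Sum>i<n. 1 - (cmod (U $$ (i,l)))\<^sup>2)"
      using GGr l by simp
    also have "\<dots> = real n - 1"
      using col_norm[OF Uc UU l] by (simp add: sum_subtractf)
    finally show ?thesis using l by simp
  qed
  have main: "(\<Sum>i<n. \<Sum>k<m. max (e i ! k - t) 0) \<le> real (n - 1) * (\<Sum>l<n. max (d ! l - t) 0)"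
    by (rule real_part[where g = g, OF _ eik g1 gr]) (auto simp: g_def)
  have "(\<Sum>i<n. sum_mset (image_mset (\<lambda>x. max (x - t) 0) (eigs (mat_delete A i i))))
       = (\<Sum>i<n. \<Sum>k<m. max (e i ! k - t) 0)"
  proof (rule sum.cong[OF refl])
    fix i assume "i \<in> {..<n}"
    hence i: "i < n" by simp
    have "eigs (mat_delete A i i) = mset (e i)"
      using Ve[OF i] Bc by (intro unitary_sim[of _ m "V i"]) auto
    thus "sum_mset (image_mset (\<lambda>x. max (x - t) 0) (eigs (mat_delete A i i))) = (\<Sum>k<m. max (e i ! k - t) 0)"
      using Ve[OF i] by (simp add: msum)
  qed
  also have "\<dots> \<le> real (n - 1) * (\<Sum>l<n. max (d ! l - t) 0)" by (rule main)
  also have "(\<Sum>l<n. max (d ! l - t) 0) = sum_mset (image_mset (\<lambda>x. max (x - t) 0) (eigs A))"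
    unfolding eA msum ld ..
  finally show ?thesis .
qed



lemma size_sumI: "size (\<Sum>i<(n::nat). (M i :: 'a multiset)) = (\<Sum>i<n. size (M i))" by (induction n) auto
lemma image_sumI: "image_mset f (\<Sum>i<(n::nat). (M i :: 'a multiset)) = (\<Sum>i<n. image_mset f (M i))" by (induction n) auto
lemma summ_sumI: "sum_mset (\<Sum>i<(n::nat). M i) = (\<Sum>i<n. sum_mset (M i :: real multiset))" by (induction n) auto
lemma repeat_img:
  fixes f :: "real \<Rightarrow> real"
  shows "sum_mset (image_mset f (repeat_mset k M)) = real k * sum_mset (image_mset f M)"
proof -
  obtain S where S: "sum_mset (image_mset f M) = S" by blast
  have "sum_mset (image_mset f (repeat_mset k M)) = real k * S"
  proof (induction k)
    case (Suc k)
    have "sum_mset (image_mset f (repeat_mset (Suc k) M)) = S + sum_mset (image_mset f (repeat_mset k M))"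
      using S by simp
    also have "\<dots> = real (Suc k) * S" using Suc by (simp add: algebra_simps)
    finally show ?case .
  qed simp
  thus ?thesis using S by simp
qed

lemma desc_mset[simp]: "mset (desc M) = M" by (simp add: desc_def)
lemma desc_len[simp]: "length (desc M) = size M" by (metis desc_mset size_mset)
lemma desc_sorted: "sorted_wrt (\<ge>) (desc M)"
  by (simp add: desc_def sorted_wrt_rev)
lemma desc_sum: "sum_list (desc M) = sum_mset M" by (metis desc_mset sum_mset_sum_list)
lemma desc_map_sum: "sum_list (map f (desc M)) = sum_mset (image_mset f M)"
  by (metis desc_mset mset_map sum_mset_sum_list)

lemma lemA: "sum_list (xs::real list) \<le> real (length xs) * t + sum_list (map (\<lambda>x. max (x - t) 0) xs)"
  by (induction xs) (auto simp: algebra_simps)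

lemma lemB: "(\<forall>y\<in>set ys. (t::real) \<le> y) \<Longrightarrow> sum_list ys = real (length ys) * t + sum_list (map (\<lambda>x. max (x - t) 0) ys)"
  by (induction ys) (auto simp: algebra_simps)

lemma lemC: "(\<forall>y\<in>set zs. y \<le> (t::real)) \<Longrightarrow> sum_list (map (\<lambda>x. max (x - t) 0) zs) = 0"
  by (induction zs) (auto simp: max_def)

lemma lemD: "sum_list (map (\<lambda>x. max (x - t) 0) (take k xs)) \<le> sum_list (map (\<lambda>x. max (x - t) 0) (xs :: real list))"
proof -
  have "sum_list (map (\<lambda>x. max (x - t) 0) xs) = sum_list (map (\<lambda>x. max (x - t) 0) (take k xs))
     + sum_list (map (\<lambda>x. max (x - t) 0) (drop k xs))"
    by (metis append_take_drop_id map_append sum_list_append)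
  moreover have "sum_list (map (\<lambda>x. max (x - t) 0) (drop k xs)) \<ge> 0"
    by (rule sum_list_nonneg) auto
  ultimately show ?thesis by simp
qed

lemma maj_crit:
  assumes sz: "size X = size Y" and sm: "sum_mset X = sum_mset Y"
    and ineq: "\<And>t. sum_mset (image_mset (\<lambda>x. max (x - t) 0) X) \<le> sum_mset (image_mset (\<lambda>x. max (x - t) 0) Y)"
  shows "majorizes Y X"
  unfolding majorizes_def
proof (intro conjI ballI)
  show "size Y = size X" using sz by simp
  show "sum_list (desc Y) = sum_list (desc X)" using sm by (simp add: desc_sum)
  fix k assume k: "k \<in> {1..size Y}"
  define xs where "xs = desc X"
  define ys where "ys = desc Y"
  define t where "t = ys ! (k - 1)"
  let ?p = "\<lambda>x. max (x - t) 0"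
  have lx: "length xs = size Y" and ly: "length ys = size Y" using sz by (auto simp: xs_def ys_def)
  have sy: "sorted_wrt (\<ge>) ys" unfolding ys_def by (rule desc_sorted)
  have take_ge: "\<forall>y\<in>set (take k ys). t \<le> y"
  proof
    fix y assume "y \<in> set (take k ys)"
    then obtain j where j: "j < length (take k ys)" and yj: "y = take k ys ! j" by (auto simp: in_set_conv_nth)
    hence "j < k" "y = ys ! j" using k ly by auto
    thus "t \<le> y" unfolding t_def using sy k ly
      by (cases "j = k - 1") (auto dest: sorted_wrt_nth_less[of _ ys j "k - 1"])
  qed
  have drop_le: "\<forall>y\<in>set (drop k ys). y \<le> t"
  proof
    fix y assume "y \<in> set (drop k ys)"
    then obtain j where j: "j < length (drop k ys)" and yj: "y = drop k ys ! j" by (auto simp: in_set_conv_nth)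
    hence "y = ys ! (k + j)" "k + j < length ys" using k ly by auto
    thus "y \<le> t" unfolding t_def using sy k ly
      by (auto dest: sorted_wrt_nth_less[of _ ys "k - 1" "k + j"])
  qed
  have "sum_list (take k xs) \<le> real (length (take k xs)) * t + sum_list (map ?p (take k xs))"
    by (rule lemA)
  also have "\<dots> \<le> real k * t + sum_list (map ?p xs)"
    using lemD[of t k xs] k lx by simp
  also have "sum_list (map ?p xs) = sum_mset (image_mset ?p X)" unfolding xs_def by (rule desc_map_sum)
  also have "\<dots> \<le> sum_mset (image_mset ?p Y)" by (rule ineq)
  also have "\<dots> = sum_list (map ?p ys)" unfolding ys_def by (rule desc_map_sum[symmetric])
  also have "\<dots> = sum_list (map ?p (take k ys)) + sum_list (map ?p (drop k ys))"
    by (metis append_take_drop_id map_append sum_list_append)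
  also have "sum_list (map ?p (drop k ys)) = 0" by (rule lemC[OF drop_le])
  also have "real k * t + (sum_list (map ?p (take k ys)) + 0) = sum_list (take k ys)"
    using lemB[OF take_ge] k ly by simp
  finally show "sum_list (take k (desc X)) \<le> sum_list (take k (desc Y))" unfolding xs_def ys_def by simp
qed



lemma herm_delete:
  assumes A: "A \<in> carrier_mat n n" and hA: "adj A = A" and i: "i < n"
  shows "adj (mat_delete A i i) = mat_delete A i i"
proof (rule eq_matI)
  fix c c' assume "c < dim_row (mat_delete A i i)" "c' < dim_col (mat_delete A i i)"
  hence c: "c < n - 1" and c': "c' < n - 1" using A by auto
  let ?h = "\<lambda>c. if c < i then c else Suc c"
  have "adj (mat_delete A i i) $$ (c,c') = cnj (A $$ (?h c', ?h c))"
    using A c c' by (simp add: mat_delete_def)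
  also have "\<dots> = adj A $$ (?h c, ?h c')" using A c c' by simp
  also have "\<dots> = A $$ (?h c, ?h c')" using hA by simp
  finally show "adj (mat_delete A i i) $$ (c,c') = mat_delete A i i $$ (c,c')"
    using A c c' by (simp add: mat_delete_def)
qed (use A in auto)

lemma size_eigs: "M \<in> carrier_mat k k \<Longrightarrow> size (eigs M) = k"
  unfolding eigs_def using degree_monic_char_poly[of M k] by (simp add: size_proots_complex)

lemma trace_eigs:
  assumes M: "M \<in> carrier_mat k k" and hM: "adj M = M"
  shows "sum_mset (eigs M) = Re (\<Sum>r<k. M $$ (r,r))"
proof -
  obtain U d where Uc: "U \<in> carrier_mat k k" and UU: "adj U * U = 1\<^sub>m k" and UU': "U * adj U = 1\<^sub>m k"
    and ld: "length d = k" and Me: "M = U * dmat d * adj U"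
    using spectral[OF M hM] by blast
  have "eigs M = mset d" by (rule unitary_sim[OF M Uc UU UU' ld Me])
  hence "sum_mset (eigs M) = sum_list d" by (simp add: sum_mset_sum_list)
  moreover have "(\<Sum>r<k. M $$ (r,r)) = complex_of_real (sum_list d)"
    unfolding Me by (rule unitary_trace[OF Uc UU ld])
  ultimately show ?thesis by simp
qed

theorem lemma4p3:
  fixes n :: nat and A :: "complex mat"
  assumes "n \<ge> 2" and "hermitian_mat n A"
  shows "majorizes (Y_pred n A) (X_pred n A)"
proof -
  have A: "A \<in> carrier_mat n n" using assms(2) by (simp add: hermitian_mat_def)
  have hA: "adj A = A" by (rule hermitian_adj[OF assms(2)])
  have Bc: "mat_delete A i i \<in> carrier_mat (n-1) (n-1)" for i using mat_delete_carrier[OF A] .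
  have hB: "adj (mat_delete A i i) = mat_delete A i i" if "i < n" for i
    by (rule herm_delete[OF A hA that])
  define T where "T = (\<Sum>r<n. Re (A $$ (r,r)))"
  have sz: "size (X_pred n A) = size (Y_pred n A)"
    unfolding X_pred_def Y_pred_def using size_eigs[OF Bc] size_eigs[OF A]
    by (simp add: size_sumI)
  have sX: "sum_mset (X_pred n A) = real (n - 1) * T"
  proof -
    have "sum_mset (X_pred n A) = (\<Sum>i<n. sum_mset (eigs (mat_delete A i i)))"
      unfolding X_pred_def by (rule summ_sumI)
    also have "\<dots> = (\<Sum>i<n. T - Re (A $$ (i,i)))"
    proof (rule sum.cong[OF refl])
      fix i assume "i \<in> {..<n}"
      hence i: "i < n" by simp
      have "sum_mset (eigs (mat_delete A i i)) = Re (\<Sum>c<n-1. mat_delete A i i $$ (c,c))"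
        by (rule trace_eigs[OF Bc hB[OF i]])
      also have "\<dots> = (\<Sum>c<n-1. Re (A $$ (if c < i then c else Suc c, if c < i then c else Suc c)))"
        using A by (simp add: Re_sum mat_delete_def)
      also have "\<dots> = T - Re (A $$ (i,i))"
        unfolding T_def by (rule reindex_ins[OF i, of "\<lambda>r. Re (A $$ (r,r))"])
      finally show "sum_mset (eigs (mat_delete A i i)) = T - Re (A $$ (i,i))" .
    qed
    also have "\<dots> = real n * T - T" by (simp add: sum_subtractf T_def)
    finally show ?thesis using assms(1) by (simp add: algebra_simps of_nat_diff)
  qed
  have sY: "sum_mset (Y_pred n A) = real (n - 1) * T"
  proof -
    have "sum_mset (Y_pred n A) = sum_mset (image_mset (\<lambda>x. x) (repeat_mset (n-1) (eigs A)))"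
      by (simp add: Y_pred_def)
    also have "\<dots> = real (n - 1) * sum_mset (image_mset (\<lambda>x. x) (eigs A))" by (rule repeat_img)
    also have "sum_mset (image_mset (\<lambda>x. x) (eigs A)) = T"
      using trace_eigs[OF A hA] by (simp add: T_def Re_sum)
    finally show ?thesis .
  qed
  show ?thesis
  proof (rule maj_crit[OF sz])
    show "sum_mset (X_pred n A) = sum_mset (Y_pred n A)" using sX sY by simp
    fix t :: real
    have "sum_mset (image_mset (\<lambda>x. max (x - t) 0) (X_pred n A))
        = (\<Sum>i<n. sum_mset (image_mset (\<lambda>x. max (x - t) 0) (eigs (mat_delete A i i))))"
      unfolding X_pred_def image_sumI summ_sumI ..
    also have "\<dots> \<le> real (n - 1) * sum_mset (image_mset (\<lambda>x. max (x - t) 0) (eigs A))"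
      by (rule key[OF A hA])
    also have "\<dots> = sum_mset (image_mset (\<lambda>x. max (x - t) 0) (Y_pred n A))"
      unfolding Y_pred_def by (rule repeat_img[symmetric])
    finally show "sum_mset (image_mset (\<lambda>x. max (x - t) 0) (X_pred n A))
        \<le> sum_mset (image_mset (\<lambda>x. max (x - t) 0) (Y_pred n A))" .
  qed
qed

end
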